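(* Consider a multi-layer perceptron with $L$ layers, where layer $\ell\in\{1,\ldots,L\}$ has weight matrix $W^{[\ell]}\in\mathbb{R}^{n^{[\ell]}\times n^{[\ell-1]}}$, bias $\theta^{[\ell]}\in\mathbb{R}^{n^{[\ell]}}$, and computes $y^{[\ell]}=f_\ell(W^{[\ell]}y^{[\ell-1]}+\theta^{[\ell]})$ with $f_\ell$ either the componentwise ReLU $z\mapsto\max(0,z)$ or the identity; $y^{[0]}=v^{[0]}$ is the network input and $g=f_L\circ\cdots$ denotes the resulting input-output map $v^{[0]}\mapsto y^{[L]}$. Let the input set be $\mathcal{V}^{[0]}=\bigcup_{s=1}^{N_0}\{v: H_s^{[0]}v\le b_s^{[0]}\}$. Define recursively $\mathcal{Y}^{[0]}=\mathcal{V}^{[0]}$ and, for $\ell=1,\ldots,L$ with $\mathcal{V}=\mathcal{Y}^{[\ell-1]}$, $W=W^{[\ell]}$, $\theta=\theta^{[\ell]}$, $n=n^{[\ell]}$: (i) if layer $\ell$ is linear, $\mathcal{Y}^{[\ell]}=\{Wv+\theta: v\in\mathcal{V}\}$; (ii) if layer $\ell$ is ReLU, $\mathcal{Y}^{[\ell]}=\bar{\mathcal{Y}}\cup\hat{\mathcal{Y}}\cup\bigcup_{m=1}^{2^n-2}\mathcal{Y}_m$, where $\bar{\mathcal{Y}}=\{0\}$ if $\{v\in\mathcal{V}: Wv+\theta\le 0\}\neq\emptyset$ and $\bar{\mathcal{Y}}=\emptyset$ otherwise; $\hat{\mathcal{Y}}=\{Wv+\theta: v\in\mathcal{V},\ Wv+\theta>0\}$;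 and $\mathcal{Y}_m=\{Q_m(Wv+\theta): v\in\mathcal{V},\ (I-Q_m)(Wv+\theta)\le0,\ Q_m(Wv+\theta)\ge 0\}$. Then the output reach set of the network satisfies $g(\mathcal{V}^{[0]})=\{g(v):v\in\mathcal{V}^{[0]}\}=\mathcal{Y}^{[L]}$.
   Context: Vector inequalities are componentwise ($>0$ means every component strictly positive). For a layer with $n$ neurons, $q_0,\ldots,q_{2^n-1}$ is an enumeration of $\{0,1\}^n$ with $q_0=(0,\ldots,0)$ and $q_{2^n-1}=(1,\ldots,1)$, and $Q_m=\mathrm{diag}(q_m)$; $I$ is the identity matrix. *)

theory Defs
  imports "Jordan_Normal_Form.Matrix"
begin

(* The library order on vec
   (v \<le> w) is componentwise with equal dimensions.  Componentwise STRICT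
   positivity is defined separately (the library '<' is the strict partial order). *)

definition vec_pos :: "real vec \<Rightarrow> bool" where
  "vec_pos v \<longleftrightarrow> (\<forall>i < dim_vec v. v $ i > 0)"

definition relu_vec :: "real vec \<Rightarrow> real vec" where
  "relu_vec z = map_vec (\<lambda>x. max 0 x) z"

definition diag_of_vec :: "real vec \<Rightarrow> real mat" where
  "diag_of_vec q = mat (dim_vec q) (dim_vec q) (\<lambda>(i,j). if i = j then q $ i else 0)"

definition binvecs :: "nat \<Rightarrow> real vec set" where
  "binvecs n = {q. dim_vec q = n \<and> (\<forall>i < n. q $ i = 0 \<or> q $ i = 1)}"

(* A layer: (weight matrix W, bias theta, is_relu).  is_relu = False means identity activation. *)
type_synonym layer = "real mat \<times> real vec \<times> bool"

definition layer_fun :: "layer \<Rightarrow> real vec \<Rightarrow> real vec" where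
  "layer_fun l v = (case l of (W, \<theta>, r) \<Rightarrow>
      (if r then relu_vec (W *\<^sub>v v + \<theta>) else W *\<^sub>v v + \<theta>))"

definition net_fun :: "layer list \<Rightarrow> real vec \<Rightarrow> real vec" where
  "net_fun ls v = fold layer_fun ls v"

definition reach_layer :: "layer \<Rightarrow> real vec set \<Rightarrow> real vec set" where
  "reach_layer l V = (case l of (W, \<theta>, r) \<Rightarrow>
     (let n = dim_row W in
      if \<not> r then {W *\<^sub>v v + \<theta> | v. v \<in> V}
      else
        (if {v \<in> V. W *\<^sub>v v + \<theta> \<le> 0\<^sub>v n} \<noteq> {} then {0\<^sub>v n} else {})
        \<union> {W *\<^sub>v v + \<theta> | v. v \<in> V \<and> vec_pos (W *\<^sub>v v + \<theta>)}
        \<union> (\<Union>q \<in> binvecs n - {0\<^sub>v n, vec n (\<lambda>_. 1)}.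
             {diag_of_vec q *\<^sub>v (W *\<^sub>v v + \<theta>) | v. v \<in> V
                \<and> (1\<^sub>m n - diag_of_vec q) *\<^sub>v (W *\<^sub>v v + \<theta>) \<le> 0\<^sub>v n
                \<and> diag_of_vec q *\<^sub>v (W *\<^sub>v v + \<theta>) \<ge> 0\<^sub>v n})))"

definition net_reach :: "layer list \<Rightarrow> real vec set \<Rightarrow> real vec set" where
  "net_reach ls V = fold reach_layer ls V"

(* layer dimensions: ns ! l = n^[l], l = 0..L *)
definition well_dimensioned :: "nat list \<Rightarrow> layer list \<Rightarrow> bool" where
  "well_dimensioned ns ls \<longleftrightarrow> length ns = length ls + 1 \<and>
     (\<forall>l < length ls. fst (ls ! l) \<in> carrier_mat (ns ! (l+1)) (ns ! l)
                    \<and> fst (snd (ls ! l)) \<in> carrier_vec (ns ! (l+1)))"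

end

theory Submission
  imports Defs
begin

lemma diag_mult: "dim_vec q = dim_vec z \<Longrightarrow> i < dim_vec z \<Longrightarrow>
   (diag_of_vec q *\<^sub>v z) $ i = q $ i * z $ i"
proof -
  assume a: "dim_vec q = dim_vec z" "i < dim_vec z"
  have "(diag_of_vec q *\<^sub>v z) $ i = (\<Sum>j\<in>{0..<dim_vec z}. (if i = j then q $ i else 0) * z $ j)"
    using a unfolding diag_of_vec_def by (simp add: scalar_prod_def row_def)
  also have "\<dots> = (\<Sum>j\<in>{0..<dim_vec z}. (if i = j then q $ i * z $ j else 0))"
    by (rule sum.cong) auto
  also have "\<dots> = q $ i * z $ i" using a(2) by simp
  finally show ?thesis .
qed

lemma diag_dim[simp]: "dim_vec (diag_of_vec q *\<^sub>v z) = dim_vec q"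
  unfolding diag_of_vec_def by simp

lemma diag_dims[simp]: "dim_row (diag_of_vec q) = dim_vec q" "dim_col (diag_of_vec q) = dim_vec q"
  "diag_of_vec q \<in> carrier_mat (dim_vec q) (dim_vec q)"
  unfolding diag_of_vec_def by auto

lemma relu_set:
  fixes z :: "real vec"
  assumes dz: "dim_vec z = n"
  shows "relu_vec z \<in> (if z \<le> 0\<^sub>v n then {0\<^sub>v n} else {})
     \<union> {z. vec_pos z}
     \<union> (\<Union>q \<in> binvecs n - {0\<^sub>v n, vec n (\<lambda>_. 1)}.
          {diag_of_vec q *\<^sub>v z |x. (1\<^sub>m n - diag_of_vec q) *\<^sub>v z \<le> 0\<^sub>v n
                \<and> diag_of_vec q *\<^sub>v z \<ge> 0\<^sub>v n})"
proof -
  define q where "q = vec n (\<lambda>i. if z $ i > 0 then 1 else (0::real))"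
  have dq: "dim_vec q = n" by (simp add: q_def)
  have Qz: "diag_of_vec q *\<^sub>v z = relu_vec z"
  proof (rule eq_vecI)
    fix i assume "i < dim_vec (relu_vec z)"
    then have i: "i < n" by (simp add: relu_vec_def dz)
    show "(diag_of_vec q *\<^sub>v z) $ i = relu_vec z $ i"
    proof -
      have e1: "(diag_of_vec q *\<^sub>v z) $ i = q $ i * z $ i"
        using diag_mult[of q z i] i dq dz by simp
      have e2: "q $ i = (if z $ i > 0 then 1 else 0)" using i unfolding q_def by simp
      have e3: "relu_vec z $ i = max 0 (z $ i)" using i dz unfolding relu_vec_def by simp
      show ?thesis unfolding e1 e3 e2 by auto
    qed
  qed (simp add: dq relu_vec_def dz)
  have IQ: "(1\<^sub>m n - diag_of_vec q) *\<^sub>v z = z - relu_vec z"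
  proof -
    have e1: "(1\<^sub>m n - diag_of_vec q) *\<^sub>v z = 1\<^sub>m n *\<^sub>v z - diag_of_vec q *\<^sub>v z"
      by (rule minus_mult_distrib_mat_vec[OF one_carrier_mat _ carrier_vecI[OF dz]])
        (metis diag_dims(3) dq)
    have e2: "1\<^sub>m n *\<^sub>v z = z" by (rule one_mult_mat_vec[OF carrier_vecI[OF dz]])
    show ?thesis unfolding e1 e2 Qz ..
  qed
  show ?thesis
  proof (cases "q = 0\<^sub>v n")
    case True
    have nz: "z $ i \<le> 0" if i: "i < n" for i
    proof -
      have "q $ i = 0" using True i by simp
      then show ?thesis using i unfolding q_def by (simp split: if_splits)
    qed
    have "z \<le> 0\<^sub>v n" unfolding less_eq_vec_def using nz dz by simp
    moreover have "relu_vec z = 0\<^sub>v n"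
      by (rule eq_vecI) (use nz dz in \<open>simp_all add: relu_vec_def\<close>)
    ultimately show ?thesis by simp
  next
    case F: False
    show ?thesis
    proof (cases "q = vec n (\<lambda>_. 1)")
      case True
      have pz: "z $ i > 0" if i: "i < n" for i
      proof -
        have "q $ i = 1" using True i by simp
        then show ?thesis using i unfolding q_def by (simp split: if_splits)
      qed
      have "vec_pos z" unfolding vec_pos_def using pz dz by simp
      moreover have "relu_vec z = z"
        by (rule eq_vecI) (use pz dz in \<open>simp_all add: relu_vec_def\<close>)
      ultimately show ?thesis by simp
    next
      case False
      have "q \<in> binvecs n" by (auto simp: binvecs_def q_def)
      then have qm: "q \<in> binvecs n - {0\<^sub>v n, vec n (\<lambda>_. 1)}" using F False by simp
      have c1: "(1\<^sub>m n - diag_of_vec q) *\<^sub>v z \<le> 0\<^sub>v n"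
        unfolding IQ less_eq_vec_def by (auto simp: relu_vec_def dz)
      have c2: "diag_of_vec q *\<^sub>v z \<ge> 0\<^sub>v n"
        unfolding Qz less_eq_vec_def by (auto simp: relu_vec_def dz)
      have "relu_vec z \<in> {diag_of_vec q *\<^sub>v z |x. (1\<^sub>m n - diag_of_vec q) *\<^sub>v z \<le> 0\<^sub>v n
                \<and> diag_of_vec q *\<^sub>v z \<ge> 0\<^sub>v n}"
        using c1 c2 Qz by simp
      then have "relu_vec z \<in> (\<Union>q \<in> binvecs n - {0\<^sub>v n, vec n (\<lambda>_. 1)}.
          {diag_of_vec q *\<^sub>v z |x. (1\<^sub>m n - diag_of_vec q) *\<^sub>v z \<le> 0\<^sub>v n
                \<and> diag_of_vec q *\<^sub>v z \<ge> 0\<^sub>v n})"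
        using qm by (rule UN_I[rotated])
      then show ?thesis by (rule UnI2)
    qed
  qed
qed

lemma reach_layer_eq:
  assumes "dim_vec (fst (snd l)) = dim_row (fst l)"
  shows "reach_layer l V = layer_fun l ` V"
proof -
  obtain W \<theta> r where l: "l = (W, \<theta>, r)" by (cases l) auto
  define n where "n = dim_row W"
  have dz: "\<And>v. dim_vec (W *\<^sub>v v + \<theta>) = n" using assms by (simp add: l n_def)
  show ?thesis
  proof (cases r)
    case False
    then show ?thesis by (auto simp: reach_layer_def layer_fun_def l)
  next
    case True
    define A :: "real vec set" where "A = (if {v \<in> V. W *\<^sub>v v + \<theta> \<le> 0\<^sub>v n} \<noteq> {} then {0\<^sub>v n} else {})"
    define B where "B = {W *\<^sub>v v + \<theta> | v. v \<in> V \<and> vec_pos (W *\<^sub>v v + \<theta>)}"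
    define C where "C = (\<Union>q \<in> binvecs n - {0\<^sub>v n, vec n (\<lambda>_. 1)}.
             {diag_of_vec q *\<^sub>v (W *\<^sub>v v + \<theta>) | v. v \<in> V
                \<and> (1\<^sub>m n - diag_of_vec q) *\<^sub>v (W *\<^sub>v v + \<theta>) \<le> 0\<^sub>v n
                \<and> diag_of_vec q *\<^sub>v (W *\<^sub>v v + \<theta>) \<ge> 0\<^sub>v n})"
    have R: "reach_layer l V = A \<union> B \<union> C"
      unfolding reach_layer_def l A_def B_def C_def n_def using True by (simp add: Let_def)
    have sub: "layer_fun l ` V \<subseteq> reach_layer l V"
    proof
      fix y assume "y \<in> layer_fun l ` V"
      then obtain v where v: "v \<in> V" "y = relu_vec (W *\<^sub>v v + \<theta>)"
        using True by (auto simp: layer_fun_def l)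
      note m = relu_set[OF dz[of v]]
      show "y \<in> reach_layer l V"
      proof -
        consider (a) "W *\<^sub>v v + \<theta> \<le> 0\<^sub>v n" "y = 0\<^sub>v n"
          | (b) "vec_pos y"
          | (c) q where "q \<in> binvecs n - {0\<^sub>v n, vec n (\<lambda>_. 1)}"
              "(1\<^sub>m n - diag_of_vec q) *\<^sub>v (W *\<^sub>v v + \<theta>) \<le> 0\<^sub>v n"
              "diag_of_vec q *\<^sub>v (W *\<^sub>v v + \<theta>) \<ge> 0\<^sub>v n"
              "y = diag_of_vec q *\<^sub>v (W *\<^sub>v v + \<theta>)"
          using m v(2) by (auto split: if_splits)
        then show ?thesis
        proof cases
          case a
          then have "y \<in> A" using v(1) unfolding A_def by auto
          then show ?thesis using R by blast
        next
          case b
          have "relu_vec (W *\<^sub>v v + \<theta>) = W *\<^sub>v v + \<theta>"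
            using b v(2) by (auto simp: relu_vec_def vec_pos_def intro!: eq_vecI)
          then have "y \<in> B" using b v unfolding B_def by auto
          then show ?thesis using R by blast
        next
          case c
          then have "y \<in> C" using v(1) unfolding C_def by blast
          then show ?thesis using R by blast
        qed
      qed
    qed
    have sup: "reach_layer l V \<subseteq> layer_fun l ` V"
    proof
      fix y assume y: "y \<in> reach_layer l V"
      have lf: "\<And>v. layer_fun l v = relu_vec (W *\<^sub>v v + \<theta>)"
        using True by (simp add: layer_fun_def l)
      consider (a) v where "v \<in> V" "W *\<^sub>v v + \<theta> \<le> 0\<^sub>v n" "y = 0\<^sub>v n"
        | (b) v where "v \<in> V" "vec_pos (W *\<^sub>v v + \<theta>)" "y = W *\<^sub>v v + \<theta>"
        | (c) q v where "q \<in> binvecs n" "v \<in> V"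
            "(1\<^sub>m n - diag_of_vec q) *\<^sub>v (W *\<^sub>v v + \<theta>) \<le> 0\<^sub>v n"
            "diag_of_vec q *\<^sub>v (W *\<^sub>v v + \<theta>) \<ge> 0\<^sub>v n"
            "y = diag_of_vec q *\<^sub>v (W *\<^sub>v v + \<theta>)"
        using y unfolding R A_def B_def C_def by (auto split: if_splits)
      then show "y \<in> layer_fun l ` V"
      proof cases
        case a
        have "relu_vec (W *\<^sub>v v + \<theta>) = y"
          using a(2,3) dz[of v] by (auto simp: relu_vec_def less_eq_vec_def intro!: eq_vecI)
        then show ?thesis using a(1) lf by (metis image_eqI)
      next
        case b
        have "relu_vec (W *\<^sub>v v + \<theta>) = y"
          using b(2,3) by (auto simp: relu_vec_def vec_pos_def intro!: eq_vecI)
        then show ?thesis using b(1) lf by (metis image_eqI)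
      next
        case c
        define z where "z = W *\<^sub>v v + \<theta>"
        have dq: "dim_vec q = n" using c(1) by (simp add: binvecs_def)
        have IQ: "(1\<^sub>m n - diag_of_vec q) *\<^sub>v z = z - diag_of_vec q *\<^sub>v z"
        proof -
          have "(1\<^sub>m n - diag_of_vec q) *\<^sub>v z = 1\<^sub>m n *\<^sub>v z - diag_of_vec q *\<^sub>v z"
            by (rule minus_mult_distrib_mat_vec[OF one_carrier_mat _ carrier_vecI])
              (metis diag_dims(3) dq, use dz[of v] in \<open>simp add: z_def\<close>)
          moreover have "1\<^sub>m n *\<^sub>v z = z"
            using one_mult_mat_vec[OF carrier_vecI[OF dz[of v]]] by (simp add: z_def)
          ultimately show ?thesis by (simp only:)
        qed
        have "relu_vec z = y"
        proof (rule eq_vecI)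
          show "dim_vec (relu_vec z) = dim_vec y" using c(5) dz[of v] dq
            by (simp add: relu_vec_def z_def)
        next
          fix i assume "i < dim_vec y"
          then have i: "i < n" using c(5) dq by simp
          have d: "(diag_of_vec q *\<^sub>v z) $ i = q $ i * z $ i"
            using diag_mult[of q z i] dq dz[of v] i by (simp add: z_def)
          have e1: "z $ i - q $ i * z $ i \<le> 0"
            using c(3) i IQ d dz[of v] dq unfolding less_eq_vec_def z_def[symmetric]
            by auto
          have e2: "q $ i * z $ i \<ge> 0"
            using c(4) i d unfolding less_eq_vec_def z_def[symmetric] by auto
          have "q $ i = 0 \<or> q $ i = 1" using c(1) i by (simp add: binvecs_def)
          then show "relu_vec z $ i = y $ i"
            using e1 e2 d c(5) i dz[of v] by (auto simp: relu_vec_def z_def)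
        qed
        then show ?thesis using c(2) lf unfolding z_def by (metis image_eqI)
      qed
    qed
    show ?thesis using sub sup by blast
  qed
qed

lemma net_reach_eq:
  assumes "\<forall>l \<in> set ls. dim_vec (fst (snd l)) = dim_row (fst l)"
  shows "net_reach ls V = net_fun ls ` V"
  using assms
proof (induction ls arbitrary: V)
  case Nil
  then show ?case by (simp add: net_reach_def net_fun_def)
next
  case (Cons l ls)
  have "net_reach (l # ls) V = net_reach ls (layer_fun l ` V)"
    using reach_layer_eq Cons.prems by (simp add: net_reach_def)
  also have "\<dots> = net_fun ls ` (layer_fun l ` V)" using Cons by simp
  finally show ?case by (simp add: net_fun_def image_image)
qed

theorem proposition1:
  fixes ns :: "nat list" and ls :: "layer list"
    and N0 :: nat and H :: "nat \<Rightarrow> real mat" and b :: "nat \<Rightarrow> real vec"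
    and V0 :: "real vec set"
  assumes "well_dimensioned ns ls"
    and "\<forall>s \<in> {1..N0}. H s \<in> carrier_mat (dim_vec (b s)) (ns ! 0)"
    and "V0 = (\<Union>s \<in> {1..N0}. {v \<in> carrier_vec (ns ! 0). H s *\<^sub>v v \<le> b s})"
  shows "net_fun ls ` V0 = net_reach ls V0"
proof -
  have "\<forall>l \<in> set ls. dim_vec (fst (snd l)) = dim_row (fst l)"
  proof
    fix l assume "l \<in> set ls"
    then obtain k where "k < length ls" "l = ls ! k" by (metis in_set_conv_nth)
    then show "dim_vec (fst (snd l)) = dim_row (fst l)"
      using assms(1) unfolding well_dimensioned_def by auto
  qed
  then show ?thesis using net_reach_eq by simp
qed

end
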